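(* For all integers $n,m\ge 2$, \[ \min\{n,m\}+2\le \gamma_{2t}(K_n\Box K_m)\le 2\min\{n,m\}. \]
   Context: All graphs are finite, simple and undirected. For a graph $G=(V,E)$, a set $S\subseteq V$ is a total $2$-dominating set if every vertex of $V$ (including those in $S$) is adjacent to at least $2$ vertices of $S$. The total $2$-domination number $\gamma_{2t}(G)$ is the minimum cardinality of a total $2$-dominating set of $G$. The Cartesian product $G\Box H$ has vertex set $V(G)\times V(H)$, with $(u_1,v_1)\sim(u_2,v_2)$ iff either $u_1=u_2$ and $v_1\sim v_2$ in $H$, or $v_1=v_2$ and $u_1\sim u_2$ in $G$. $K_n$ is the complete graph on $n$ vertices. *)

theory Defs
  imports Main
begin

text \<open>A finite simple graph is represented by a vertex set V and a symmetric,
irreflexive adjacency relation E (only its restriction to V matters).\<close>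

definition total_k_dominating :: "nat \<Rightarrow> 'a set \<Rightarrow> ('a \<Rightarrow> 'a \<Rightarrow> bool) \<Rightarrow> 'a set \<Rightarrow> bool" where
  "total_k_dominating k V E S \<longleftrightarrow>
     S \<subseteq> V \<and> (\<forall>v\<in>V. card {u\<in>S. E v u} \<ge> k)"

definition total_2_dom_number :: "'a set \<Rightarrow> ('a \<Rightarrow> 'a \<Rightarrow> bool) \<Rightarrow> nat" where
  "total_2_dom_number V E = (LEAST c. \<exists>S. total_k_dominating 2 V E S \<and> card S = c)"

definition complete_graph :: "nat \<Rightarrow> nat set \<times> (nat \<Rightarrow> nat \<Rightarrow> bool)" where
  "complete_graph n = ({0..<n}, \<lambda>u v. u \<noteq> v)"

definition cart_prod :: "'a set \<times> ('a \<Rightarrow> 'a \<Rightarrow> bool) \<Rightarrow> 'b set \<times> ('b \<Rightarrow> 'b \<Rightarrow> bool)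
    \<Rightarrow> ('a \<times> 'b) set \<times> ('a \<times> 'b \<Rightarrow> 'a \<times> 'b \<Rightarrow> bool)" where
  "cart_prod G H = (fst G \<times> fst H,
     \<lambda>(u1, v1) (u2, v2). (u1 = u2 \<and> snd H v1 v2) \<or> (v1 = v2 \<and> snd G u1 u2))"

definition gamma_2t :: "'a set \<times> ('a \<Rightarrow> 'a \<Rightarrow> bool) \<Rightarrow> nat" where
  "gamma_2t G = total_2_dom_number (fst G) (snd G)"

end

theory Submission
  imports Defs
begin

definition EE :: "nat \<times> nat \<Rightarrow> nat \<times> nat \<Rightarrow> bool" where
  "EE = (\<lambda>(u1, v1) (u2, v2). (u1 = u2 \<and> v1 \<noteq> v2) \<or> (v1 = v2 \<and> u1 \<noteq> u2))"

lemma EE_simp[simp]: "EE (a,b) (c,d) \<longleftrightarrow> (a = c \<and> b \<noteq> d) \<or> (b = d \<and> a \<noteq> c)"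
  by (simp add: EE_def)

lemma gamma_eq:
  "gamma_2t (cart_prod (complete_graph n) (complete_graph m))
   = total_2_dom_number ({0..<n} \<times> {0..<m}) EE"
  unfolding gamma_2t_def cart_prod_def complete_graph_def EE_def by simp

lemma rowsum:
  fixes n m :: nat
  assumes "S \<subseteq> {0..<n} \<times> {0..<m}"
  shows "card S = (\<Sum>i<n. card {x\<in>S. fst x = i})"
proof -
  have fin: "finite S" using finite_subset[OF assms] by simp
  have "S = (\<Union>i\<in>{..<n}. {x\<in>S. fst x = i})" using assms by fastforce
  then have "card S = card (\<Union>i\<in>{..<n}. {x\<in>S. fst x = i})" by (rule arg_cong)
  also have "\<dots> = (\<Sum>i<n. card {x\<in>S. fst x = i})"
    by (rule card_UN_disjoint) (use fin in auto)
  finally show ?thesis .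
qed

lemma colsum:
  fixes n m :: nat
  assumes "S \<subseteq> {0..<n} \<times> {0..<m}"
  shows "card S = (\<Sum>j<m. card {x\<in>S. snd x = j})"
proof -
  have fin: "finite S" using finite_subset[OF assms] by simp
  have "S = (\<Union>j\<in>{..<m}. {x\<in>S. snd x = j})" using assms by fastforce
  then have "card S = card (\<Union>j\<in>{..<m}. {x\<in>S. snd x = j})" by (rule arg_cong)
  also have "\<dots> = (\<Sum>j<m. card {x\<in>S. snd x = j})"
    by (rule card_UN_disjoint) (use fin in auto)
  finally show ?thesis .
qed

lemma low:
  assumes n2: "n \<ge> 2" and m2: "m \<ge> 2" and sub: "S \<subseteq> {0..<n} \<times> {0..<m}"
    and dom: "\<forall>v\<in>{0..<n} \<times> {0..<m}. card {u\<in>S. EE v u} \<ge> 2"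
  shows "min n m + 2 \<le> card S"
proof -
  have fin: "finite S" using finite_subset[OF sub] by simp
  have dom': "\<And>i j. i < n \<Longrightarrow> j < m \<Longrightarrow> card {u\<in>S. EE (i,j) u} \<ge> 2"
    using dom by auto
  have cover: "(\<forall>i<n. \<exists>x\<in>S. fst x = i) \<or> (\<forall>j<m. \<exists>x\<in>S. snd x = j)"
  proof (rule ccontr)
    assume "\<not> ?thesis"
    then obtain i j where ij: "i < n" "j < m" "\<forall>x\<in>S. fst x \<noteq> i" "\<forall>x\<in>S. snd x \<noteq> j" by auto
    have "{u\<in>S. EE (i,j) u} = {}" using ij(3,4) by auto
    with dom'[OF ij(1,2)] show False by simp
  qed
  let ?r = "\<lambda>i. card {x\<in>S. fst x = i}"
  let ?c = "\<lambda>j. card {x\<in>S. snd x = j}"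
  show ?thesis
    using cover
  proof
    assume rows: "\<forall>i<n. \<exists>x\<in>S. fst x = i"
    show ?thesis
    proof (cases "\<exists>i<n. ?r i < 2")
      case True
      then obtain i where i: "i < n" "?r i < 2" by auto
      from rows i obtain x where x: "x \<in> S" "fst x = i" by auto
      have fr: "finite {x\<in>S. fst x = i}" using fin by auto
      have "?r i \<noteq> 0" using fr x card_0_eq by blast
      with i have "?r i = 1" by simp
      then obtain a where a: "{x\<in>S. fst x = i} = {a}" using card_1_singletonE by blast
      obtain i0 j where a0: "a = (i0,j)" by (cases a)
      have "a \<in> {x\<in>S. fst x = i}" using a by simp
      hence "i0 = i" using a0 by simp
      hence aij: "a = (i,j)" using a0 by simp
      have aS: "(i,j) \<in> S" using a aij by auto
      have j: "j < m" using aS sub by auto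
      have rowonly: "k = j" if "(i,k) \<in> S" for k
      proof -
        have "(i,k) \<in> {x\<in>S. fst x = i}" using that by simp
        thus ?thesis using a aij by simp
      qed
      have "{u\<in>S. EE (i,j) u} \<subseteq> {x\<in>S. snd x = j} - {(i,j)}"
      proof
        fix u assume u: "u \<in> {u\<in>S. EE (i,j) u}"
        obtain p q where pq: "u = (p,q)" by (cases u)
        have uS: "(p,q) \<in> S" and e: "EE (i,j) (p,q)" using u pq by auto
        have "\<not> (i = p \<and> j \<noteq> q)" using rowonly uS by blast
        with e have "j = q \<and> i \<noteq> p" by simp
        thus "u \<in> {x\<in>S. snd x = j} - {(i,j)}" using uS pq by simp
      qed
      hence "card {u\<in>S. EE (i,j) u} \<le> card ({x\<in>S. snd x = j} - {(i,j)})"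
        using fin by (intro card_mono) auto
      also have "\<dots> = ?c j - 1" using aS by (simp add: card_Diff_singleton fin)
      finally have cj: "?c j \<ge> 3" using dom'[OF i(1) j] by simp
      have ck: "?c k \<ge> 1" if k: "k < m" "k \<noteq> j" for k
      proof -
        have "{u\<in>S. EE (i,k) u} \<subseteq> {(i,j)} \<union> {x\<in>S. snd x = k}"
        proof
          fix u assume u: "u \<in> {u\<in>S. EE (i,k) u}"
          obtain p q where pq: "u = (p,q)" by (cases u)
          have uS: "(p,q) \<in> S" and e: "EE (i,k) (p,q)" using u pq by auto
          show "u \<in> {(i,j)} \<union> {x\<in>S. snd x = k}"
          proof (cases "p = i")
            case True
            then have "q = j" using rowonly uS by blast
            then show ?thesis using True pq by simp
          next
            case False
            then have "q = k" using e by auto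
            then show ?thesis using uS pq by simp
          qed
        qed
        hence "card {u\<in>S. EE (i,k) u} \<le> card ({(i,j)} \<union> {x\<in>S. snd x = k})"
          using fin by (intro card_mono) auto
        also have "\<dots> \<le> 1 + ?c k"
          using card_Un_le[of "{(i,j)}" "{x\<in>S. snd x = k}"] by simp
        finally show ?thesis using dom'[OF i(1) k(1)] by simp
      qed
      have "card S = (\<Sum>k<m. ?c k)" by (rule colsum[OF sub])
      also have "\<dots> = ?c j + (\<Sum>k\<in>{..<m} - {j}. ?c k)"
        using j by (simp add: sum.remove)
      finally have eqs: "card S = ?c j + (\<Sum>k\<in>{..<m} - {j}. ?c k)" .
      have "(\<Sum>k\<in>{..<m} - {j}. ?c k) \<ge> (\<Sum>k\<in>{..<m} - {j}. 1)"
        using ck by (intro sum_mono) auto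
      hence "(\<Sum>k\<in>{..<m} - {j}. ?c k) \<ge> m - 1" using j by simp
      with eqs have "card S \<ge> 3 + (m - 1)" using cj j by simp
      thus ?thesis by linarith
    next
      case False
      have "card S = (\<Sum>k<n. ?r k)" by (rule rowsum[OF sub])
      also have "\<dots> \<ge> (\<Sum>k<n. 2)" using False by (intro sum_mono) auto
      finally have "card S \<ge> 2 * n" by simp
      thus ?thesis using n2 by linarith
    qed
  next
    assume cols: "\<forall>j<m. \<exists>x\<in>S. snd x = j"
    show ?thesis
    proof (cases "\<exists>j<m. ?c j < 2")
      case True
      then obtain j where j: "j < m" "?c j < 2" by auto
      from cols j obtain x where x: "x \<in> S" "snd x = j" by auto
      have fr: "finite {x\<in>S. snd x = j}" using fin by auto
      have "?c j \<noteq> 0" using fr x card_0_eq by blast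
      with j have "?c j = 1" by simp
      then obtain a where a: "{x\<in>S. snd x = j} = {a}" using card_1_singletonE by blast
      obtain i j0 where a0: "a = (i,j0)" by (cases a)
      have "a \<in> {x\<in>S. snd x = j}" using a by simp
      hence "j0 = j" using a0 by simp
      hence aij: "a = (i,j)" using a0 by simp
      have aS: "(i,j) \<in> S" using a aij by auto
      have i: "i < n" using aS sub by auto
      have colonly: "k = i" if "(k,j) \<in> S" for k
      proof -
        have "(k,j) \<in> {x\<in>S. snd x = j}" using that by simp
        thus ?thesis using a aij by simp
      qed
      have "{u\<in>S. EE (i,j) u} \<subseteq> {x\<in>S. fst x = i} - {(i,j)}"
      proof
        fix u assume u: "u \<in> {u\<in>S. EE (i,j) u}"
        obtain p q where pq: "u = (p,q)" by (cases u)
        have uS: "(p,q) \<in> S" and e: "EE (i,j) (p,q)" using u pq by auto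
        have "\<not> (j = q \<and> i \<noteq> p)" using colonly uS by blast
        with e have "i = p \<and> j \<noteq> q" by simp
        thus "u \<in> {x\<in>S. fst x = i} - {(i,j)}" using uS pq by simp
      qed
      hence "card {u\<in>S. EE (i,j) u} \<le> card ({x\<in>S. fst x = i} - {(i,j)})"
        using fin by (intro card_mono) auto
      also have "\<dots> = ?r i - 1" using aS by (simp add: card_Diff_singleton fin)
      finally have ri: "?r i \<ge> 3" using dom'[OF i j(1)] by simp
      have rk: "?r k \<ge> 1" if k: "k < n" "k \<noteq> i" for k
      proof -
        have "{u\<in>S. EE (k,j) u} \<subseteq> {(i,j)} \<union> {x\<in>S. fst x = k}"
        proof
          fix u assume u: "u \<in> {u\<in>S. EE (k,j) u}"
          obtain p q where pq: "u = (p,q)" by (cases u)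
          have uS: "(p,q) \<in> S" and e: "EE (k,j) (p,q)" using u pq by auto
          show "u \<in> {(i,j)} \<union> {x\<in>S. fst x = k}"
          proof (cases "q = j")
            case True
            then have "p = i" using colonly uS by blast
            then show ?thesis using True pq by simp
          next
            case False
            then have "p = k" using e by auto
            then show ?thesis using uS pq by simp
          qed
        qed
        hence "card {u\<in>S. EE (k,j) u} \<le> card ({(i,j)} \<union> {x\<in>S. fst x = k})"
          using fin by (intro card_mono) auto
        also have "\<dots> \<le> 1 + ?r k"
          using card_Un_le[of "{(i,j)}" "{x\<in>S. fst x = k}"] by simp
        finally show ?thesis using dom'[OF k(1) j(1)] by simp
      qed
      have "card S = (\<Sum>k<n. ?r k)" by (rule rowsum[OF sub])
      also have "\<dots> = ?r i + (\<Sum>k\<in>{..<n} - {i}. ?r k)"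
        using i by (simp add: sum.remove)
      finally have eqs: "card S = ?r i + (\<Sum>k\<in>{..<n} - {i}. ?r k)" .
      have "(\<Sum>k\<in>{..<n} - {i}. ?r k) \<ge> (\<Sum>k\<in>{..<n} - {i}. 1)"
        using rk by (intro sum_mono) auto
      hence "(\<Sum>k\<in>{..<n} - {i}. ?r k) \<ge> n - 1" using i by simp
      with eqs have "card S \<ge> 3 + (n - 1)" using ri i by simp
      thus ?thesis by linarith
    next
      case False
      have "card S = (\<Sum>k<m. ?c k)" by (rule colsum[OF sub])
      also have "\<dots> \<ge> (\<Sum>k<m. 2)" using False by (intro sum_mono) auto
      finally have "card S \<ge> 2 * m" by simp
      thus ?thesis using m2 by linarith
    qed
  qed
qed

lemma witness_rows:
  assumes "n \<ge> 2" "m \<ge> 2"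
  shows "total_k_dominating 2 ({0..<n} \<times> {0..<m}) EE ({0..<n} \<times> {0,1})
         \<and> card ({0..<n} \<times> {0::nat,1}) = 2 * n"
proof -
  have D: "card {u \<in> {0..<n} \<times> {0,1}. EE (i,j) u} \<ge> 2" if "i < n" "j < m" for i j
  proof (cases "j \<le> 1")
    case False
    have "{(i,0),(i,1)} \<subseteq> {u \<in> {0..<n} \<times> {0,1}. EE (i,j) u}" using False that by auto
    hence "card {(i,0::nat),(i,1)} \<le> card {u \<in> {0..<n} \<times> {0,1}. EE (i,j) u}"
      by (intro card_mono) auto
    thus ?thesis by simp
  next
    case True
    define i' where "i' = (if i = 0 then 1 else (0::nat))"
    have i': "i' < n" "i' \<noteq> i" using assms unfolding i'_def by auto
    have "{(i,1-j),(i',j)} \<subseteq> {u \<in> {0..<n} \<times> {0,1}. EE (i,j) u}" using True that i' by (cases "j = 0") auto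
    hence "card {(i,1-j),(i',j)} \<le> card {u \<in> {0..<n} \<times> {0,1}. EE (i,j) u}"
      by (intro card_mono) auto
    thus ?thesis using i' by simp
  qed
  have "\<forall>v\<in>{0..<n} \<times> {0..<m}. card {u \<in> {0..<n} \<times> {0,1}. EE v u} \<ge> 2"
    using D by (auto simp del: EE_simp)
  moreover have "card ({0..<n} \<times> {0::nat,1}) = 2 * n" by (simp add: card_cartesian_product)
  moreover have "{0..<n} \<times> {0::nat,1} \<subseteq> {0..<n} \<times> {0..<m}" using assms by auto
  ultimately show ?thesis unfolding total_k_dominating_def by blast
qed

lemma witness_cols:
  assumes "n \<ge> 2" "m \<ge> 2"
  shows "total_k_dominating 2 ({0..<n} \<times> {0..<m}) EE ({0,1} \<times> {0..<m})
         \<and> card ({0::nat,1} \<times> {0..<m}) = 2 * m"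
proof -
  have D: "card {u \<in> {0,1} \<times> {0..<m}. EE (i,j) u} \<ge> 2" if "i < n" "j < m" for i j
  proof (cases "i \<le> 1")
    case False
    have "{(0,j),(1,j)} \<subseteq> {u \<in> {0,1} \<times> {0..<m}. EE (i,j) u}" using False that by auto
    hence "card {(0::nat,j),(1,j)} \<le> card {u \<in> {0,1} \<times> {0..<m}. EE (i,j) u}"
      by (intro card_mono) auto
    thus ?thesis by simp
  next
    case True
    define j' where "j' = (if j = 0 then 1 else (0::nat))"
    have j': "j' < m" "j' \<noteq> j" using assms unfolding j'_def by auto
    have "{(1-i,j),(i,j')} \<subseteq> {u \<in> {0,1} \<times> {0..<m}. EE (i,j) u}" using True that j' by (cases "i = 0") auto
    hence "card {(1-i,j),(i,j')} \<le> card {u \<in> {0,1} \<times> {0..<m}. EE (i,j) u}"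
      by (intro card_mono) auto
    thus ?thesis using j' by simp
  qed
  have "\<forall>v\<in>{0..<n} \<times> {0..<m}. card {u \<in> {0,1} \<times> {0..<m}. EE v u} \<ge> 2"
    using D by (auto simp del: EE_simp)
  moreover have "card ({0::nat,1} \<times> {0..<m}) = 2 * m" by (simp add: card_cartesian_product)
  moreover have "{0::nat,1} \<times> {0..<m} \<subseteq> {0..<n} \<times> {0..<m}" using assms by auto
  ultimately show ?thesis unfolding total_k_dominating_def by blast
qed

theorem lemma1:
  fixes n m :: nat
  assumes "n \<ge> 2" and "m \<ge> 2"
  shows "min n m + 2 \<le> gamma_2t (cart_prod (complete_graph n) (complete_graph m)) \<and>
         gamma_2t (cart_prod (complete_graph n) (complete_graph m)) \<le> 2 * min n m"
proof -
  let ?P = "\<lambda>c. \<exists>S. total_k_dominating 2 ({0..<n} \<times> {0..<m}) EE S \<and> card S = c"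
  have g: "gamma_2t (cart_prod (complete_graph n) (complete_graph m)) = (LEAST c. ?P c)"
    by (simp add: gamma_eq total_2_dom_number_def)
  have p1: "?P (2*n)" using witness_rows[OF assms] by blast
  have p2: "?P (2*m)" using witness_cols[OF assms] by blast
  have up: "(LEAST c. ?P c) \<le> 2 * min n m"
    using Least_le[of ?P, OF p1] Least_le[of ?P, OF p2] by (simp add: min_def)
  have "?P (LEAST c. ?P c)" using LeastI[of ?P, OF p1] .
  then obtain S where S: "total_k_dominating 2 ({0..<n} \<times> {0..<m}) EE S"
    "card S = (LEAST c. ?P c)" by blast
  have "min n m + 2 \<le> card S"
    using S(1) low[OF assms] unfolding total_k_dominating_def by blast
  with S(2) up g show ?thesis by simp
qed

end
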